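(* Let $r \geq 1$ and $d \geq 1$ be integers. Let $H$ be a bipartite graph with bipartition $(V_1,V_2)$ and $m$ edges, such that there are $r$ vertices in $V_1$ each of which is adjacent to every vertex of $V_2$, and every vertex of $V_1$ has degree at least $d$. Then for every graph $G$, $$t_{H}(G) \geq t_{K_{r,d}}(G)^{\frac{m}{rd}}.$$
   Context: All graphs are finite and simple. A homomorphism from a graph $H$ to a graph $G$ is a map $f:V(H)\to V(G)$ such that $(f(u),f(v))$ is an edge of $G$ for every edge $(u,v)$ of $H$. Let $h_H(G)$ denote the number of homomorphisms from $H$ to $G$, and $t_H(G)=h_H(G)/|V(G)|^{|V(H)|}$ (the fraction of all maps $V(H)\to V(G)$ that are homomorphisms). $K_{r,d}$ denotes the complete bipartite graph with parts of sizes $r$ and $d$. *)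

theory Defs
  imports Complex_Main "HOL-Library.FuncSet"
begin

definition simple_graph :: "'a set \<Rightarrow> ('a \<Rightarrow> 'a \<Rightarrow> bool) \<Rightarrow> bool" where
  "simple_graph V E \<longleftrightarrow> finite V \<and> (\<forall>u v. E u v \<longrightarrow> u \<in> V \<and> v \<in> V)
     \<and> (\<forall>u v. E u v \<longrightarrow> E v u) \<and> (\<forall>u. \<not> E u u)"

definition num_edges :: "'a set \<Rightarrow> ('a \<Rightarrow> 'a \<Rightarrow> bool) \<Rightarrow> nat" where
  "num_edges V E = card {{u, v} | u v. u \<in> V \<and> v \<in> V \<and> E u v}"

definition degree :: "'a set \<Rightarrow> ('a \<Rightarrow> 'a \<Rightarrow> bool) \<Rightarrow> 'a \<Rightarrow> nat" where
  "degree V E x = card {y \<in> V. E x y}"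

definition homs :: "'a set \<Rightarrow> ('a \<Rightarrow> 'a \<Rightarrow> bool) \<Rightarrow> 'b set \<Rightarrow> ('b \<Rightarrow> 'b \<Rightarrow> bool) \<Rightarrow> ('a \<Rightarrow> 'b) set" where
  "homs VH EH VG EG = {f \<in> VH \<rightarrow>\<^sub>E VG. \<forall>u v. EH u v \<longrightarrow> EG (f u) (f v)}"

definition hom_count :: "'a set \<Rightarrow> ('a \<Rightarrow> 'a \<Rightarrow> bool) \<Rightarrow> 'b set \<Rightarrow> ('b \<Rightarrow> 'b \<Rightarrow> bool) \<Rightarrow> nat" where
  "hom_count VH EH VG EG = card (homs VH EH VG EG)"

definition hom_density :: "'a set \<Rightarrow> ('a \<Rightarrow> 'a \<Rightarrow> bool) \<Rightarrow> 'b set \<Rightarrow> ('b \<Rightarrow> 'b \<Rightarrow> bool) \<Rightarrow> real" where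
  "hom_density VH EH VG EG = real (hom_count VH EH VG EG) / real (card VG) ^ card VH"

definition Krd_verts :: "nat \<Rightarrow> nat \<Rightarrow> (nat + nat) set" where
  "Krd_verts r d = Inl ` {..<r} \<union> Inr ` {..<d}"

definition Krd_edge :: "nat \<Rightarrow> nat \<Rightarrow> (nat + nat) \<Rightarrow> (nat + nat) \<Rightarrow> bool" where
  "Krd_edge r d x y \<longleftrightarrow>
     (\<exists>i j. i < r \<and> j < d \<and> ((x = Inl i \<and> y = Inr j) \<or> (x = Inr j \<and> y = Inl i)))"

end

theory Submission
  imports Defs
begin


definition cmn :: "'b set \<Rightarrow> ('b \<Rightarrow> 'b \<Rightarrow> bool) \<Rightarrow> ('a \<Rightarrow> 'b) \<Rightarrow> 'a set \<Rightarrow> 'b set" where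
  "cmn V E f X = {w\<in>V. \<forall>u\<in>X. E (f u) w}"

lemma cmn_cong: "(\<And>u. u \<in> X \<Longrightarrow> f u = g u) \<Longrightarrow> cmn V E f X = cmn V E g X"
  unfolding cmn_def by auto

lemma cmn_sub: "cmn V E f X \<subseteq> V" unfolding cmn_def by auto

lemma sum_PiE_split:
  assumes "finite X" "finite Y" "X \<inter> Y = {}"
  shows "(\<Sum>f\<in>PiE (X \<union> Y) B. F f) =
         (\<Sum>a\<in>PiE X B. \<Sum>b\<in>PiE Y B. F (\<lambda>i. if i \<in> X then a i else b i))"
proof -
  have "(\<Sum>f\<in>PiE (X \<union> Y) B. F f) =
        (\<Sum>(a,b)\<in>PiE X B \<times> PiE Y B. F (\<lambda>i. if i \<in> X then a i else b i))"
    apply (rule sum.reindex_bij_witness[of _ "\<lambda>(a,b) i. if i \<in> X then a i else b i"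
                  "\<lambda>f. (restrict f X, restrict f Y)"])
    using assms apply (auto simp: PiE_def extensional_def restrict_def fun_eq_iff Pi_def)
    apply (rule arg_cong[where f=F]) apply (auto simp: fun_eq_iff)
    done
  also have "\<dots> = (\<Sum>a\<in>PiE X B. \<Sum>b\<in>PiE Y B. F (\<lambda>i. if i \<in> X then a i else b i))"
    by (rule sum.cartesian_product[symmetric])
  finally show ?thesis .
qed

lemma sum_PiE_ind:
  fixes c :: "'c::comm_semiring_1"
  assumes "finite A" "finite V" "N \<subseteq> V"
  shows "(\<Sum>g\<in>PiE A (\<lambda>_. V). if \<forall>v\<in>A. g v \<in> N then c else 0) = c * of_nat (card N ^ card A)"
proof -
  have fin: "finite (PiE A (\<lambda>_. V))" using assms by (simp add: finite_PiE)
  have "(\<Sum>g\<in>PiE A (\<lambda>_. V). if \<forall>v\<in>A. g v \<in> N then c else 0) =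
        (\<Sum>g\<in>{g\<in>PiE A (\<lambda>_. V). \<forall>v\<in>A. g v \<in> N}. c)"
    by (rule sum.inter_filter[OF fin, symmetric])
  also have "{g\<in>PiE A (\<lambda>_. V). \<forall>v\<in>A. g v \<in> N} = PiE A (\<lambda>_. N)"
    using assms by (auto simp: PiE_def Pi_def)
  also have "(\<Sum>g\<in>PiE A (\<lambda>_. N). c) = c * of_nat (card N ^ card A)"
    using assms by (simp add: card_PiE mult.commute)
  finally show ?thesis .
qed

lemma prod_ind:
  assumes "finite P"
  shows "(\<Prod>x\<in>P. if Q x then 1 else 0) = (if \<forall>x\<in>P. Q x then 1 else (0::'c::comm_semiring_1))"
proof (cases "\<forall>x\<in>P. Q x")
  case True then show ?thesis by simp
next
  case False
  then obtain x where "x \<in> P" "\<not> Q x" by auto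
  then show ?thesis using assms False by (subst prod_zero) auto
qed

lemma gibbs:
  fixes \<nu> \<rho> :: "'a \<Rightarrow> real"
  assumes "finite \<Omega>" "\<And>w. w \<in> \<Omega> \<Longrightarrow> \<nu> w \<ge> 0" "sum \<nu> \<Omega> = 1"
    "\<And>w. w \<in> \<Omega> \<Longrightarrow> \<nu> w > 0 \<Longrightarrow> \<rho> w > 0" "(\<Sum>w\<in>\<Omega>. \<nu> w * \<rho> w) \<le> 1"
  shows "(\<Sum>w\<in>\<Omega>. \<nu> w * ln (\<rho> w)) \<le> 0"
proof -
  have "(\<Sum>w\<in>\<Omega>. \<nu> w * ln (\<rho> w)) \<le> (\<Sum>w\<in>\<Omega>. \<nu> w * \<rho> w - \<nu> w)"
  proof (rule sum_mono)
    fix w assume w: "w \<in> \<Omega>"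
    show "\<nu> w * ln (\<rho> w) \<le> \<nu> w * \<rho> w - \<nu> w"
    proof (cases "\<nu> w = 0")
      case False
      then have p: "\<nu> w > 0" using assms(2)[OF w] by auto
      have "ln (\<rho> w) \<le> \<rho> w - 1" using assms(4)[OF w p] ln_le_minus_one by blast
      with p show ?thesis by (metis mult_left_mono less_imp_le right_diff_distrib mult.right_neutral)
    qed simp
  qed
  also have "\<dots> = (\<Sum>w\<in>\<Omega>. \<nu> w * \<rho> w) - 1" using assms(3) by (simp add: sum_subtractf)
  finally show ?thesis using assms(5) by linarith
qed

lemma cmn_swap:
  assumes sym: "\<And>u v. E u v \<Longrightarrow> E v u"
    and "z \<in> PiE A (\<lambda>_. V)" "y \<in> PiE B (\<lambda>_. V)"
  shows "(\<forall>v\<in>B. y v \<in> cmn V E z A) \<longleftrightarrow> (\<forall>i\<in>A. z i \<in> cmn V E y B)"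
  using assms unfolding cmn_def by (auto simp: PiE_def Pi_def) 

lemma double_count:
  fixes A :: "'a set" and B :: "'c set"
  assumes sym: "\<And>u v. E u v \<Longrightarrow> E v u" and fin: "finite A" "finite B" "finite V"
  shows "(\<Sum>z\<in>PiE A (\<lambda>_. V). card (cmn V E z A) ^ card B) =
         (\<Sum>y\<in>PiE B (\<lambda>_. V). card (cmn V E y B) ^ card A)"
proof -
  have "(\<Sum>z\<in>PiE A (\<lambda>_. V). card (cmn V E z A) ^ card B) =
     (\<Sum>z\<in>PiE A (\<lambda>_. V). \<Sum>y\<in>PiE B (\<lambda>_. V). if \<forall>v\<in>B. y v \<in> cmn V E z A then 1 else 0)"
    using fin by (intro sum.cong refl) (simp add: sum_PiE_ind cmn_sub)
  also have "\<dots> = (\<Sum>y\<in>PiE B (\<lambda>_. V). \<Sum>z\<in>PiE A (\<lambda>_. V). if \<forall>v\<in>B. y v \<in> cmn V E z A then 1 else 0)"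
    by (rule sum.swap)
  also have "\<dots> = (\<Sum>y\<in>PiE B (\<lambda>_. V). \<Sum>z\<in>PiE A (\<lambda>_. V). if \<forall>i\<in>A. z i \<in> cmn V E y B then 1 else 0)"
    apply (intro sum.cong refl)
    subgoal for y z using cmn_swap[OF sym, where z=z and A=A and V=V and y=y and B=B] by simp
    done
  also have "\<dots> = (\<Sum>y\<in>PiE B (\<lambda>_. V). card (cmn V E y B) ^ card A)"
    using fin by (intro sum.cong refl) (simp add: sum_PiE_ind cmn_sub)
  finally show ?thesis .
qed

lemma sum_ind_card:
  assumes "finite V" "N \<subseteq> V"
  shows "(\<Sum>w\<in>V. if w \<in> N then 1 else 0::real) = real (card N)"
proof -
  have "(\<Sum>w\<in>V. if w \<in> N then 1 else 0::real) = (\<Sum>w\<in>{w\<in>V. w \<in> N}. 1)"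
    by (rule sum.inter_filter[OF assms(1), symmetric])
  also have "{w\<in>V. w \<in> N} = N" using assms by auto
  finally show ?thesis by simp
qed

lemma sum_sub_split:
  fixes G :: "('a \<Rightarrow> 'b) \<Rightarrow> real"
  assumes fin: "finite A" "finite V" and XA: "X \<subseteq> A" and NV: "N \<subseteq> V"
    and congG: "\<And>g g'. (\<forall>i\<in>X. g i = g' i) \<Longrightarrow> G g = G g'"
  shows "(\<Sum>g\<in>PiE A (\<lambda>_. V). if (\<forall>v\<in>A. g v \<in> N) then G g else 0) =
         real (card N) ^ card (A - X) * (\<Sum>y\<in>PiE X (\<lambda>_. V). if (\<forall>v\<in>X. y v \<in> N) then G y else 0)"
proof -
  have finX: "finite X" using fin XA finite_subset by blast
  have AX: "A = X \<union> (A - X)" using XA by auto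
  have "(\<Sum>g\<in>PiE A (\<lambda>_. V). if (\<forall>v\<in>A. g v \<in> N) then G g else 0) =
        (\<Sum>y\<in>PiE X (\<lambda>_. V). \<Sum>b\<in>PiE (A - X) (\<lambda>_. V).
           (\<lambda>g. if (\<forall>v\<in>A. g v \<in> N) then G g else 0) (\<lambda>i. if i \<in> X then y i else b i))"
    by (subst AX, subst sum_PiE_split) (use fin finX in auto)
  also have "\<dots> = (\<Sum>y\<in>PiE X (\<lambda>_. V). real (card N) ^ card (A - X) * (if (\<forall>v\<in>X. y v \<in> N) then G y else 0))"
  proof (intro sum.cong refl)
    fix y assume y: "y \<in> PiE X (\<lambda>_. V)"
    have G: "G (\<lambda>i. if i \<in> X then y i else b i) = G y" for b by (rule congG) auto
    show "(\<Sum>b\<in>PiE (A - X) (\<lambda>_. V). (\<lambda>g. if (\<forall>v\<in>A. g v \<in> N) then G g else 0) (\<lambda>i. if i \<in> X then y i else b i))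
        = real (card N) ^ card (A - X) * (if (\<forall>v\<in>X. y v \<in> N) then G y else 0)"
    proof (cases "\<forall>v\<in>X. y v \<in> N")
      case True
      have "(\<Sum>b\<in>PiE (A - X) (\<lambda>_. V). (\<lambda>g. if (\<forall>v\<in>A. g v \<in> N) then G g else 0) (\<lambda>i. if i \<in> X then y i else b i))
         = (\<Sum>b\<in>PiE (A - X) (\<lambda>_. V). if (\<forall>v\<in>A - X. b v \<in> N) then G y else 0)"
        using True XA by (intro sum.cong refl) (auto simp: G)
      also have "\<dots> = G y * real (card N ^ card (A - X))"
        using fin NV by (intro sum_PiE_ind) auto
      finally show ?thesis using True by simp
    next
      case False
      then have nb: "\<not> (\<forall>v\<in>A. (if v \<in> X then y v else b v) \<in> N)" for b using XA by auto
      show ?thesis using False by (simp only: nb if_False sum.neutral_const)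
    qed
  qed
  also have "\<dots> = real (card N) ^ card (A - X) * (\<Sum>y\<in>PiE X (\<lambda>_. V). if (\<forall>v\<in>X. y v \<in> N) then G y else 0)"
    by (simp add: sum_distrib_left)
  finally show ?thesis .
qed

locale core =
  fixes VG :: "'b set" and EG :: "'b \<Rightarrow> 'b \<Rightarrow> bool"
    and R V2 P :: "'a set" and S :: "'a \<Rightarrow> 'a set" and d r :: nat
  assumes finVG: "finite VG" and symG: "\<And>u v. EG u v \<Longrightarrow> EG v u"
    and finR: "finite R" and finV2: "finite V2" and finP: "finite P"
    and disj1: "R \<inter> V2 = {}" and disj2: "R \<inter> P = {}" and disj3: "V2 \<inter> P = {}"
    and S_sub: "\<And>x. x \<in> P \<Longrightarrow> S x \<subseteq> V2"
    and S_card: "\<And>x. x \<in> P \<Longrightarrow> d \<le> card (S x)"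
    and cardR: "card R = r" and r1: "1 \<le> r" and d1: "1 \<le> d" and dV2: "d \<le> card V2"
begin

abbreviation cc :: "('a \<Rightarrow> 'b) \<Rightarrow> 'a set \<Rightarrow> real" where "cc f X \<equiv> real (card (cmn VG EG f X))"
abbreviation nn :: real where "nn \<equiv> real (card VG)"
abbreviation Om where "Om \<equiv> PiE (R \<union> V2 \<union> P) (\<lambda>_. VG)"
abbreviation n2 where "n2 \<equiv> card V2"

definition indRV :: "('a \<Rightarrow> 'b) \<Rightarrow> bool" where "indRV f \<longleftrightarrow> (\<forall>v\<in>V2. \<forall>i\<in>R. EG (f i) (f v))"
definition indP :: "('a \<Rightarrow> 'b) \<Rightarrow> bool" where "indP f \<longleftrightarrow> (\<forall>x\<in>P. \<forall>v\<in>S x. EG (f v) (f x))"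
definition hh :: real where "hh = (\<Sum>z\<in>PiE R (\<lambda>_. VG). cc z R ^ d)"
definition nu :: "('a \<Rightarrow> 'b) \<Rightarrow> real" where
  "nu f = (if indRV f \<and> indP f then cc f R ^ d / (hh * cc f R ^ n2 * (\<Prod>x\<in>P. cc f (S x))) else 0)"

lemma R_ne: "R \<noteq> {}" using cardR r1 by auto
lemma V2_ne: "V2 \<noteq> {}" using dV2 d1 by auto

lemma finOm: "finite Om" using finR finV2 finP finVG by (simp add: finite_PiE)

lemma cc_pos_V2:
  assumes "indRV f" "\<forall>i\<in>R. f i \<in> VG" "X \<subseteq> V2"
  shows "cc f X > 0"
proof -
  obtain i where i: "i \<in> R" using R_ne by auto
  have "f i \<in> cmn VG EG f X" using assms i unfolding cmn_def indRV_def by (auto intro: symG)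
  moreover have "finite (cmn VG EG f X)" using finVG cmn_sub finite_subset by metis
  ultimately show ?thesis by (simp add: card_gt_0_iff) blast
qed

lemma cc_pos_R:
  assumes "indRV f" "\<forall>v\<in>V2. f v \<in> VG"
  shows "cc f R > 0"
proof -
  obtain v where v: "v \<in> V2" using V2_ne by auto
  have "f v \<in> cmn VG EG f R" using assms v unfolding cmn_def indRV_def by auto
  moreover have "finite (cmn VG EG f R)" using finVG cmn_sub finite_subset by metis
  ultimately show ?thesis by (simp add: card_gt_0_iff) blast
qed

lemma sumP:
  fixes F :: "('a \<Rightarrow> 'b) \<Rightarrow> real"
  assumes cong: "\<And>f g. (\<forall>i\<in>R \<union> V2. f i = g i) \<Longrightarrow> F f = F g"
    and supp: "\<And>a. a \<in> PiE (R \<union> V2) (\<lambda>_. VG) \<Longrightarrow> F a \<noteq> 0 \<Longrightarrow> indRV a"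
  shows "(\<Sum>f\<in>Om. if indP f then F f / (\<Prod>x\<in>P. cc f (S x)) else 0) = (\<Sum>a\<in>PiE (R \<union> V2) (\<lambda>_. VG). F a)"
proof -
  let ?Q = "R \<union> V2"
  have "(\<Sum>f\<in>Om. if indP f then F f / (\<Prod>x\<in>P. cc f (S x)) else 0) =
        (\<Sum>a\<in>PiE ?Q (\<lambda>_. VG). \<Sum>b\<in>PiE P (\<lambda>_. VG).
          (\<lambda>f. if indP f then F f / (\<Prod>x\<in>P. cc f (S x)) else 0) (\<lambda>i. if i \<in> ?Q then a i else b i))"
    by (rule sum_PiE_split) (use finR finV2 finP disj2 disj3 in auto)
  also have "\<dots> = (\<Sum>a\<in>PiE ?Q (\<lambda>_. VG). F a)"
  proof (intro sum.cong refl)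
    fix a assume a: "a \<in> PiE ?Q (\<lambda>_. VG)"
    define m where "m b = (\<lambda>i. if i \<in> ?Q then a i else b i)" for b :: "'a \<Rightarrow> 'b"
    have Fm: "F (m b) = F a" for b by (rule cong) (auto simp: m_def)
    have cm: "cmn VG EG (m b) (S x) = cmn VG EG a (S x)" if "x \<in> P" for x b
      using S_sub[OF that] by (intro cmn_cong) (auto simp: m_def)
    have im: "indP (m b) \<longleftrightarrow> (\<forall>x\<in>P. b x \<in> cmn VG EG a (S x))" if b: "b \<in> PiE P (\<lambda>_. VG)" for b
    proof -
      have "x \<in> P \<Longrightarrow> x \<notin> ?Q" for x using disj2 disj3 by auto
      moreover have "x \<in> P \<Longrightarrow> v \<in> S x \<Longrightarrow> v \<in> ?Q" for x v using S_sub by auto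
      ultimately show ?thesis using b unfolding indP_def cmn_def m_def by (auto simp: PiE_def Pi_def)
    qed
    have "(\<Sum>b\<in>PiE P (\<lambda>_. VG). (\<lambda>f. if indP f then F f / (\<Prod>x\<in>P. cc f (S x)) else 0) (m b)) =
          (\<Sum>b\<in>PiE P (\<lambda>_. VG). (F a / (\<Prod>x\<in>P. cc a (S x))) * (\<Prod>x\<in>P. if b x \<in> cmn VG EG a (S x) then 1 else 0))"
      by (intro sum.cong refl) (simp add: im Fm cm prod_ind[OF finP])
    also have "\<dots> = (F a / (\<Prod>x\<in>P. cc a (S x))) * (\<Prod>x\<in>P. \<Sum>w\<in>VG. if w \<in> cmn VG EG a (S x) then 1 else 0)"
      by (simp add: sum_distrib_left prod_sum_PiE[OF finP finVG])
    also have "\<dots> = (F a / (\<Prod>x\<in>P. cc a (S x))) * (\<Prod>x\<in>P. cc a (S x))"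
      by (simp add: sum_ind_card[OF finVG cmn_sub])
    also have "\<dots> = F a"
    proof (cases "F a = 0")
      case False
      then have "indRV a" using supp a by blast
      then have "\<forall>x\<in>P. cc a (S x) > 0" using a S_sub by (intro ballI cc_pos_V2) (auto simp: PiE_def Pi_def)
      then have "(\<Prod>x\<in>P. cc a (S x)) \<noteq> 0" by (simp add: prod_pos less_imp_neq[symmetric])
      then show ?thesis by simp
    qed simp
    finally have fin: "(\<Sum>b\<in>PiE P (\<lambda>_. VG). (\<lambda>f. if indP f then F f / (\<Prod>x\<in>P. cc f (S x)) else 0) (m b)) = F a" .
    from fin[unfolded m_def] show "(\<Sum>b\<in>PiE P (\<lambda>_. VG). (\<lambda>f. if indP f then F f / (\<Prod>x\<in>P. cc f (S x)) else 0)
                     (\<lambda>i. if i \<in> ?Q then a i else b i)) = F a" .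
  qed
  finally show ?thesis .
qed

lemma sumRV:
  "(\<Sum>a\<in>PiE (R \<union> V2) (\<lambda>_. VG). F a) =
   (\<Sum>z\<in>PiE R (\<lambda>_. VG). \<Sum>g\<in>PiE V2 (\<lambda>_. VG). F (\<lambda>i. if i \<in> R then z i else g i))"
  by (rule sum_PiE_split) (use finR finV2 disj1 in auto)

lemma merge_R: "cmn VG EG (\<lambda>i. if i \<in> R then z i else g i) R = cmn VG EG z R"
  by (intro cmn_cong) auto

lemma merge_X: "X \<subseteq> V2 \<Longrightarrow> cmn VG EG (\<lambda>i. if i \<in> R then z i else g i) X = cmn VG EG g X"
  using disj1 by (intro cmn_cong) auto

lemma merge_ind:
  assumes "g \<in> PiE V2 (\<lambda>_. VG)"
  shows "indRV (\<lambda>i. if i \<in> R then z i else g i) \<longleftrightarrow> (\<forall>v\<in>V2. g v \<in> cmn VG EG z R)"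
  using assms disj1 unfolding indRV_def cmn_def by (auto simp: PiE_def Pi_def)


lemma indRV_cong: "(\<forall>i\<in>R \<union> V2. f i = g i) \<Longrightarrow> indRV f = indRV g"
  unfolding indRV_def by auto

lemma card_PiE_const: "finite A \<Longrightarrow> card (PiE A (\<lambda>_. VG)) = card VG ^ card A"
  by (simp add: card_PiE)

lemma nn_pos: assumes "hh > 0" shows "nn > 0"
proof (rule ccontr)
  assume "\<not> nn > 0"
  then have "VG = {}" using finVG by auto
  then have "PiE R (\<lambda>_. VG) = {}" using R_ne by (auto simp: PiE_eq_empty_iff)
  then have "hh = 0" by (simp add: hh_def)
  then show False using assms by simp
qed

lemma hh_alt:
  assumes "finite D" "card D = d"
  shows "hh = (\<Sum>y\<in>PiE D (\<lambda>_. VG). cc y D ^ r)"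
proof -
  have "hh = real (\<Sum>z\<in>PiE R (\<lambda>_. VG). card (cmn VG EG z R) ^ card D)"
    unfolding hh_def using assms by simp
  also have "\<dots> = real (\<Sum>y\<in>PiE D (\<lambda>_. VG). card (cmn VG EG y D) ^ card R)"
    using double_count[OF symG finR assms(1) finVG] by simp
  also have "\<dots> = (\<Sum>y\<in>PiE D (\<lambda>_. VG). cc y D ^ r)" using cardR by simp
  finally show ?thesis .
qed

lemma sumX:
  fixes Gy :: "('a \<Rightarrow> 'b) \<Rightarrow> real"
  assumes XV: "X \<subseteq> V2" and Xne: "X \<noteq> {}"
    and congG: "\<And>f g. (\<forall>i\<in>X. f i = g i) \<Longrightarrow> Gy f = Gy g"
  shows "(\<Sum>a\<in>PiE (R \<union> V2) (\<lambda>_. VG). if indRV a then cc a R ^ card X / cc a R ^ n2 * Gy a else 0)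
         = (\<Sum>y\<in>PiE X (\<lambda>_. VG). Gy y * cc y X ^ r)"
proof -
  have finX: "finite X" using XV finV2 finite_subset by blast
  have "(\<Sum>a\<in>PiE (R \<union> V2) (\<lambda>_. VG). if indRV a then cc a R ^ card X / cc a R ^ n2 * Gy a else 0)
     = (\<Sum>z\<in>PiE R (\<lambda>_. VG). \<Sum>g\<in>PiE V2 (\<lambda>_. VG).
          if (\<forall>v\<in>V2. g v \<in> cmn VG EG z R) then cc z R ^ card X / cc z R ^ n2 * Gy g else 0)"
    unfolding sumRV
  proof (intro sum.cong refl)
    fix z g assume g: "g \<in> PiE V2 (\<lambda>_. VG)"
    have "Gy (\<lambda>i. if i \<in> R then z i else g i) = Gy g" using XV disj1 by (intro congG) auto
    then show "(if indRV (\<lambda>i. if i \<in> R then z i else g i)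
          then cc (\<lambda>i. if i \<in> R then z i else g i) R ^ card X / cc (\<lambda>i. if i \<in> R then z i else g i) R ^ n2 *
               Gy (\<lambda>i. if i \<in> R then z i else g i) else 0) =
        (if (\<forall>v\<in>V2. g v \<in> cmn VG EG z R) then cc z R ^ card X / cc z R ^ n2 * Gy g else 0)"
      by (simp only: merge_ind[OF g] merge_R)
  qed
  also have "\<dots> = (\<Sum>z\<in>PiE R (\<lambda>_. VG). cc z R ^ (n2 - card X) * (\<Sum>y\<in>PiE X (\<lambda>_. VG).
          if (\<forall>v\<in>X. y v \<in> cmn VG EG z R) then cc z R ^ card X / cc z R ^ n2 * Gy y else 0))"
  proof (intro sum.cong refl)
    fix z
    show "(\<Sum>g\<in>PiE V2 (\<lambda>_. VG).
          if (\<forall>v\<in>V2. g v \<in> cmn VG EG z R) then cc z R ^ card X / cc z R ^ n2 * Gy g else 0) =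
          cc z R ^ (n2 - card X) * (\<Sum>y\<in>PiE X (\<lambda>_. VG).
          if (\<forall>v\<in>X. y v \<in> cmn VG EG z R) then cc z R ^ card X / cc z R ^ n2 * Gy y else 0)"
      using sum_sub_split[OF finV2 finVG XV cmn_sub, of "\<lambda>y. cc z R ^ card X / cc z R ^ n2 * Gy y"]
        congG card_Diff_subset[OF finX XV] by simp
  qed
  also have "\<dots> = (\<Sum>z\<in>PiE R (\<lambda>_. VG). \<Sum>y\<in>PiE X (\<lambda>_. VG).
          if (\<forall>v\<in>X. y v \<in> cmn VG EG z R) then Gy y else 0)"
  proof (intro sum.cong refl)
    fix z
    have "cc z R ^ (n2 - card X) * (if (\<forall>v\<in>X. y v \<in> cmn VG EG z R) then cc z R ^ card X / cc z R ^ n2 * Gy y else 0)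
         = (if (\<forall>v\<in>X. y v \<in> cmn VG EG z R) then Gy y else 0)" for y
    proof (cases "\<forall>v\<in>X. y v \<in> cmn VG EG z R")
      case True
      then have "cmn VG EG z R \<noteq> {}" using Xne by auto
      moreover have "finite (cmn VG EG z R)" using finVG cmn_sub finite_subset by metis
      ultimately have pos: "cc z R > 0" by (simp add: card_gt_0_iff)
      have cX: "card X \<le> n2" using XV finV2 card_mono by blast
      have "cc z R ^ (n2 - card X) * cc z R ^ card X = cc z R ^ n2"
        using cX by (simp add: power_add[symmetric])
      then show ?thesis using True pos by (simp add: field_simps)
    next
      case False
      show ?thesis by (simp only: if_not_P[OF False] mult_zero_right)
    qed
    then show "cc z R ^ (n2 - card X) * (\<Sum>y\<in>PiE X (\<lambda>_. VG).
          if (\<forall>v\<in>X. y v \<in> cmn VG EG z R) then cc z R ^ card X / cc z R ^ n2 * Gy y else 0) =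
          (\<Sum>y\<in>PiE X (\<lambda>_. VG). if (\<forall>v\<in>X. y v \<in> cmn VG EG z R) then Gy y else 0)"
      by (simp add: sum_distrib_left)
  qed
  also have "\<dots> = (\<Sum>y\<in>PiE X (\<lambda>_. VG). \<Sum>z\<in>PiE R (\<lambda>_. VG).
          if (\<forall>i\<in>R. z i \<in> cmn VG EG y X) then Gy y else 0)"
    apply (subst sum.swap)
    apply (intro sum.cong refl)
    subgoal for y z using cmn_swap[OF symG, where z=z and A=R and V=VG and y=y and B=X] by simp
    done
  also have "\<dots> = (\<Sum>y\<in>PiE X (\<lambda>_. VG). Gy y * cc y X ^ r)"
    using cardR by (intro sum.cong refl) (simp add: sum_PiE_ind[OF finR finVG cmn_sub])
  finally show ?thesis .
qed


lemma Om_VG: "f \<in> Om \<Longrightarrow> i \<in> R \<union> V2 \<union> P \<Longrightarrow> f i \<in> VG"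
  by (auto simp: PiE_def Pi_def)

lemma pos_facts:
  assumes f: "f \<in> Om" and ind: "indRV f"
  shows "cc f R > 0" "\<And>X. X \<subseteq> V2 \<Longrightarrow> cc f X > 0" "(\<Prod>x\<in>P. cc f (S x)) > 0"
proof -
  show "cc f R > 0" using ind Om_VG[OF f] by (intro cc_pos_R) auto
  show "\<And>X. X \<subseteq> V2 \<Longrightarrow> cc f X > 0" using ind Om_VG[OF f] by (intro cc_pos_V2) auto
  then show "(\<Prod>x\<in>P. cc f (S x)) > 0" using S_sub by (intro prod_pos) auto
qed

lemma nu_nonneg: "hh \<ge> 0 \<Longrightarrow> nu f \<ge> 0"
  unfolding nu_def by (auto intro!: divide_nonneg_nonneg mult_nonneg_nonneg prod_nonneg)

lemma hh_nonneg: "hh \<ge> 0" unfolding hh_def by (auto intro: sum_nonneg)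

lemma F_cong_R:
  "(\<forall>i\<in>R \<union> V2. f i = g i) \<Longrightarrow> cmn VG EG f R = cmn VG EG g R"
  by (intro cmn_cong) auto

lemma F_cong_X:
  "X \<subseteq> V2 \<Longrightarrow> (\<forall>i\<in>R \<union> V2. f i = g i) \<Longrightarrow> cmn VG EG f X = cmn VG EG g X"
  by (intro cmn_cong) auto

lemma sum_nu:
  assumes hpos: "hh > 0"
  shows "(\<Sum>f\<in>Om. nu f) = 1"
proof -
  obtain D0 where D0: "D0 \<subseteq> V2" "card D0 = d" "finite D0"
    using obtain_subset_with_card_n[OF dV2] by metis
  have D0ne: "D0 \<noteq> {}" using D0 d1 by auto
  define F where "F f = (if indRV f then cc f R ^ card D0 / cc f R ^ n2 * (1 / hh) else 0)" for f
  have "(\<Sum>f\<in>Om. nu f) = (\<Sum>f\<in>Om. if indP f then F f / (\<Prod>x\<in>P. cc f (S x)) else 0)"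
    by (intro sum.cong refl) (simp add: nu_def F_def D0 field_simps)
  also have "\<dots> = (\<Sum>a\<in>PiE (R \<union> V2) (\<lambda>_. VG). F a)"
  proof (rule sumP)
    fix f g :: "'a \<Rightarrow> 'b" assume "\<forall>i\<in>R \<union> V2. f i = g i"
    then show "F f = F g" unfolding F_def using indRV_cong F_cong_R by metis
  qed (simp add: F_def split: if_splits)
  also have "\<dots> = (\<Sum>y\<in>PiE D0 (\<lambda>_. VG). 1 / hh * cc y D0 ^ r)"
    unfolding F_def by (rule sumX[OF D0(1) D0ne]) simp
  also have "\<dots> = 1" using hh_alt[OF D0(3) D0(2)] hpos by (simp add: sum_divide_distrib[symmetric])
  finally show ?thesis .
qed

lemma sum_rho1:
  assumes hpos: "hh > 0"
  shows "(\<Sum>f\<in>Om. nu f * (hh / (nn ^ r * cc f R ^ d))) \<le> 1"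
proof -
  have npos: "nn > 0" using nn_pos[OF hpos] .
  define F where "F f = (if indRV f then 1 / (nn ^ r * cc f R ^ n2) else 0)" for f
  have "(\<Sum>f\<in>Om. nu f * (hh / (nn ^ r * cc f R ^ d))) = (\<Sum>f\<in>Om. if indP f then F f / (\<Prod>x\<in>P. cc f (S x)) else 0)"
  proof (intro sum.cong refl)
    fix f assume f: "f \<in> Om"
    show "nu f * (hh / (nn ^ r * cc f R ^ d)) = (if indP f then F f / (\<Prod>x\<in>P. cc f (S x)) else 0)"
    proof (cases "indRV f \<and> indP f")
      case True
      note p = pos_facts[OF f True[THEN conjunct1]]
      show ?thesis using True p(1) p(3) hpos npos by (simp add: nu_def F_def field_simps)
    qed (auto simp: nu_def F_def)
  qed
  also have "\<dots> = (\<Sum>a\<in>PiE (R \<union> V2) (\<lambda>_. VG). F a)"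
  proof (rule sumP)
    fix f g :: "'a \<Rightarrow> 'b" assume "\<forall>i\<in>R \<union> V2. f i = g i"
    then show "F f = F g" unfolding F_def using indRV_cong F_cong_R by metis
  qed (simp add: F_def split: if_splits)
  also have "\<dots> = (\<Sum>z\<in>PiE R (\<lambda>_. VG). \<Sum>g\<in>PiE V2 (\<lambda>_. VG).
        if (\<forall>v\<in>V2. g v \<in> cmn VG EG z R) then 1 / (nn ^ r * cc z R ^ n2) else 0)"
    unfolding sumRV F_def
  proof (intro sum.cong refl)
    fix z g assume g: "g \<in> PiE V2 (\<lambda>_. VG)"
    show "(if indRV (\<lambda>i. if i \<in> R then z i else g i)
          then 1 / (nn ^ r * cc (\<lambda>i. if i \<in> R then z i else g i) R ^ n2) else 0) =
        (if (\<forall>v\<in>V2. g v \<in> cmn VG EG z R) then 1 / (nn ^ r * cc z R ^ n2) else 0)"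
      by (simp only: merge_ind[OF g] merge_R)
  qed
  also have "\<dots> = (\<Sum>z\<in>PiE R (\<lambda>_. VG). 1 / (nn ^ r * cc z R ^ n2) * cc z R ^ n2)"
    by (intro sum.cong refl) (simp add: sum_PiE_ind[OF finV2 finVG cmn_sub])
  also have "\<dots> \<le> (\<Sum>z\<in>PiE R (\<lambda>_. VG). 1 / nn ^ r)"
  proof (rule sum_mono)
    fix z
    show "1 / (nn ^ r * cc z R ^ n2) * cc z R ^ n2 \<le> 1 / nn ^ r"
      using npos by (cases "cc z R = 0") (simp_all add: field_simps)
  qed
  also have "\<dots> = 1" using npos cardR finR by (simp add: card_PiE_const)
  finally show ?thesis .
qed


end


lemma alg2:
  fixes A B As H N P M Q D :: real
  assumes "A * B = As" "H \<noteq> 0" "N \<noteq> 0" "P \<noteq> 0" "M \<noteq> 0" "Q \<noteq> 0"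
  shows "A / (H * N * P) * (B * D / (M * Q)) = As / N * (D / (H * M * Q)) / P"
proof -
  have "A / (H * N * P) * (B * D / (M * Q)) = (A * B) * D / (H * N * P * M * Q)" by simp
  also have "\<dots> = As * D / (H * N * P * M * Q)" using assms(1) by simp
  also have "\<dots> = As / N * (D / (H * M * Q)) / P" using assms by (simp add: field_simps)
  finally show ?thesis .
qed

context core begin
lemma sum_rho3:
  assumes hpos: "hh > 0" and DV: "D \<subseteq> V2" and cD: "card D = d"
  shows "(\<Sum>f\<in>Om. nu f * (hh / (cc f D ^ r * nn ^ d))) \<le> 1"
proof -
  have npos: "nn > 0" using nn_pos[OF hpos] .
  have finD: "finite D" using DV finV2 finite_subset by blast
  have Dne: "D \<noteq> {}" using cD d1 by auto
  define F where "F f = (if indRV f then cc f R ^ card D / cc f R ^ n2 * (1 / (cc f D ^ r * nn ^ d)) else 0)" for f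
  have "(\<Sum>f\<in>Om. nu f * (hh / (cc f D ^ r * nn ^ d))) = (\<Sum>f\<in>Om. if indP f then F f / (\<Prod>x\<in>P. cc f (S x)) else 0)"
  proof (intro sum.cong refl)
    fix f assume f: "f \<in> Om"
    show "nu f * (hh / (cc f D ^ r * nn ^ d)) = (if indP f then F f / (\<Prod>x\<in>P. cc f (S x)) else 0)"
    proof (cases "indRV f \<and> indP f")
      case True
      note p = pos_facts[OF f True[THEN conjunct1]]
      have "cc f D > 0" using p(2) DV by blast
      then show ?thesis using True p(1) p(3) hpos npos cD by (simp add: nu_def F_def field_simps)
    qed (auto simp: nu_def F_def)
  qed
  also have "\<dots> = (\<Sum>a\<in>PiE (R \<union> V2) (\<lambda>_. VG). F a)"
  proof (rule sumP)
    fix f g :: "'a \<Rightarrow> 'b" assume fg: "\<forall>i\<in>R \<union> V2. f i = g i"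
    then show "F f = F g" unfolding F_def using indRV_cong[OF fg] F_cong_R[OF fg] F_cong_X[OF DV fg] by simp
  next
    fix a assume "F a \<noteq> 0" then show "indRV a" by (metis F_def)
  qed
  also have "\<dots> = (\<Sum>y\<in>PiE D (\<lambda>_. VG). 1 / (cc y D ^ r * nn ^ d) * cc y D ^ r)"
    unfolding F_def
  proof (rule sumX[OF DV Dne])
    fix f g :: "'a \<Rightarrow> 'b" assume fg: "\<forall>i\<in>D. f i = g i"
    then have e1: "cmn VG EG f D = cmn VG EG g D" by (intro cmn_cong) auto
    show "1 / (cc f D ^ r * nn ^ d) = 1 / (cc g D ^ r * nn ^ d)" by (simp only: e1)
  qed
  also have "\<dots> \<le> (\<Sum>y\<in>PiE D (\<lambda>_. VG). 1 / nn ^ d)"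
  proof (rule sum_mono)
    fix y
    show "1 / (cc y D ^ r * nn ^ d) * cc y D ^ r \<le> 1 / nn ^ d"
      using npos by (cases "cc y D = 0") (simp_all add: field_simps)
  qed
  also have "\<dots> = 1" using npos cD finD by (simp add: card_PiE_const)
  finally show ?thesis .
qed

lemma sum_rho2:
  assumes hpos: "hh > 0" and x: "x \<in> P" and DS: "D \<subseteq> S x" and cD: "card D = d"
  shows "(\<Sum>f\<in>Om. nu f * (cc f R ^ (card (S x) - d) * cc f D ^ r / (nn ^ (card (S x) - d) * cc f (S x) ^ r))) \<le> 1"
proof -
  let ?S = "S x" let ?s = "card (S x)"
  have npos: "nn > 0" using nn_pos[OF hpos] .
  have SV: "?S \<subseteq> V2" using S_sub[OF x] .
  have finS: "finite ?S" using SV finV2 finite_subset by blast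
  have finD: "finite D" using DS finS finite_subset by blast
  have DV: "D \<subseteq> V2" using DS SV by blast
  have ds: "d \<le> ?s" using S_card[OF x] .
  have Sne: "?S \<noteq> {}" using ds d1 by auto
  define F where "F f = (if indRV f then cc f R ^ card ?S / cc f R ^ n2 *
                     (cc f D ^ r / (hh * nn ^ (?s - d) * cc f ?S ^ r)) else 0)" for f
  have "(\<Sum>f\<in>Om. nu f * (cc f R ^ (?s - d) * cc f D ^ r / (nn ^ (?s - d) * cc f ?S ^ r)))
       = (\<Sum>f\<in>Om. if indP f then F f / (\<Prod>x\<in>P. cc f (S x)) else 0)"
  proof (intro sum.cong refl)
    fix f assume f: "f \<in> Om"
    show "nu f * (cc f R ^ (?s - d) * cc f D ^ r / (nn ^ (?s - d) * cc f ?S ^ r)) =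
          (if indP f then F f / (\<Prod>x\<in>P. cc f (S x)) else 0)"
    proof (cases "indRV f \<and> indP f")
      case True
      note p = pos_facts[OF f True[THEN conjunct1]]
      have cS: "cc f ?S > 0" using p(2) SV by blast
      have pw: "cc f R ^ d * cc f R ^ (?s - d) = cc f R ^ ?s"
        using ds by (simp add: power_add[symmetric])
      have e1: "nu f = cc f R ^ d / (hh * cc f R ^ n2 * (\<Prod>x\<in>P. cc f (S x)))" using True by (simp add: nu_def)
      have e2: "(if indP f then F f / (\<Prod>x\<in>P. cc f (S x)) else 0) = cc f R ^ card ?S / cc f R ^ n2 *
          (cc f D ^ r / (hh * nn ^ (?s - d) * cc f ?S ^ r)) / (\<Prod>x\<in>P. cc f (S x))" using True by (simp add: F_def)
      show ?thesis unfolding e1 e2 by (rule alg2[OF pw]) (use cS p(1) p(3) hpos npos in auto)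
    qed (auto simp: nu_def F_def)
  qed
  also have "\<dots> = (\<Sum>a\<in>PiE (R \<union> V2) (\<lambda>_. VG). F a)"
  proof (rule sumP)
    fix f g :: "'a \<Rightarrow> 'b" assume fg: "\<forall>i\<in>R \<union> V2. f i = g i"
    then show "F f = F g" unfolding F_def
      using indRV_cong[OF fg] F_cong_R[OF fg] F_cong_X[OF DV fg] F_cong_X[OF SV fg] by simp
  next
    fix a assume "F a \<noteq> 0" then show "indRV a" by (metis F_def)
  qed
  also have "\<dots> = (\<Sum>y\<in>PiE ?S (\<lambda>_. VG). cc y D ^ r / (hh * nn ^ (?s - d) * cc y ?S ^ r) * cc y ?S ^ r)"
    unfolding F_def
  proof (rule sumX[OF SV Sne])
    fix f g :: "'a \<Rightarrow> 'b" assume fg: "\<forall>i\<in>?S. f i = g i"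
    then have "\<forall>i\<in>D. f i = g i" using DS by blast
    then have e1: "cmn VG EG f D = cmn VG EG g D" by (intro cmn_cong) auto
    have e2: "cmn VG EG f ?S = cmn VG EG g ?S" using fg by (intro cmn_cong) auto
    show "cc f D ^ r / (hh * nn ^ (?s - d) * cc f ?S ^ r) = cc g D ^ r / (hh * nn ^ (?s - d) * cc g ?S ^ r)"
      by (simp only: e1 e2)
  qed
  also have "\<dots> \<le> (\<Sum>y\<in>PiE ?S (\<lambda>_. VG). cc y D ^ r / (hh * nn ^ (?s - d)))"
  proof (rule sum_mono)
    fix y
    show "cc y D ^ r / (hh * nn ^ (?s - d) * cc y ?S ^ r) * cc y ?S ^ r \<le> cc y D ^ r / (hh * nn ^ (?s - d))"
      using npos hpos by (cases "cc y ?S = 0") (simp_all add: field_simps)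
  qed
  also have "\<dots> = (\<Sum>y1\<in>PiE D (\<lambda>_. VG). \<Sum>y2\<in>PiE (?S - D) (\<lambda>_. VG).
                   cc (\<lambda>i. if i \<in> D then y1 i else y2 i) D ^ r / (hh * nn ^ (?s - d)))"
  proof -
    have eq: "D \<union> (?S - D) = ?S" using DS by blast
    have "(\<Sum>y\<in>PiE (D \<union> (?S - D)) (\<lambda>_. VG). cc y D ^ r / (hh * nn ^ (?s - d))) = (\<Sum>y1\<in>PiE D (\<lambda>_. VG). \<Sum>y2\<in>PiE (?S - D) (\<lambda>_. VG).
                   cc (\<lambda>i. if i \<in> D then y1 i else y2 i) D ^ r / (hh * nn ^ (?s - d)))"
      by (rule sum_PiE_split) (use finD finS in auto)
    then show ?thesis unfolding eq .
  qed
  also have "\<dots> = (\<Sum>y1\<in>PiE D (\<lambda>_. VG). nn ^ (?s - d) * (cc y1 D ^ r / (hh * nn ^ (?s - d))))"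
  proof (intro sum.cong refl)
    fix y1
    have "cmn VG EG (\<lambda>i. if i \<in> D then y1 i else y2 i) D = cmn VG EG y1 D" for y2
      by (intro cmn_cong) auto
    moreover have "card (?S - D) = ?s - d" using card_Diff_subset[OF finD DS] cD by simp
    ultimately show "(\<Sum>y2\<in>PiE (?S - D) (\<lambda>_. VG). cc (\<lambda>i. if i \<in> D then y1 i else y2 i) D ^ r / (hh * nn ^ (?s - d)))
        = nn ^ (?s - d) * (cc y1 D ^ r / (hh * nn ^ (?s - d)))"
      using finS by (simp add: card_PiE_const)
  qed
  also have "\<dots> = (\<Sum>y1\<in>PiE D (\<lambda>_. VG). cc y1 D ^ r) / hh"
    using npos by (simp add: sum_divide_distrib)
  also have "\<dots> = 1" using hh_alt[OF finD cD] hpos by simp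
  finally show ?thesis .
qed

end



lemma sum_lin:
  fixes s lx :: "'a \<Rightarrow> real" and d lR r l lh :: real
  shows "(\<Sum>x\<in>P. (s x - d) * lR - r * lx x - s x * l + lh) =
         (sum s P - real (card P) * d) * lR - r * sum lx P - sum s P * l + real (card P) * lh"
  by (simp add: sum.distrib sum_subtractf sum_distrib_left sum_distrib_right algebra_simps)

lemma alg:
  fixes rr dd N p Ssum lR SL lh l LH :: real
  assumes "rr > 0" "dd > 0"
  shows "(lh + N * lR + SL - LH - dd * lR) + ((N - dd + (Ssum - p * dd) / rr) / dd) * (lh - rr * l - dd * lR)
         + (1 / rr) * ((Ssum - p * dd) * lR - rr * SL - Ssum * l + p * lh)
       = (rr * N + Ssum) / (rr * dd) * (lh - (rr + dd) * l) + (rr + N + p) * l - LH"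
  using assms by (simp add: field_simps)

context core begin

lemma core_main:
  assumes hpos: "hh > 0" and finHS: "finite HS"
    and sub: "\<And>f. f \<in> Om \<Longrightarrow> indRV f \<Longrightarrow> indP f \<Longrightarrow> f \<in> HS"
  shows "card HS > 0 \<and>
    (real r * n2 + (\<Sum>x\<in>P. real (card (S x)))) / (real r * d) * (ln hh - (r + d) * ln nn)
      + (r + n2 + card P) * ln nn \<le> ln (card HS)"
proof -
  have npos: "nn > 0" using nn_pos[OF hpos] .
  have sumnu: "(\<Sum>f\<in>Om. nu f) = 1" using sum_nu[OF hpos] .
  have nunn: "\<And>f. nu f \<ge> 0" using nu_nonneg hh_nonneg by blast
  have nupos: "indRV f \<and> indP f" if "nu f \<noteq> 0" for f using that unfolding nu_def by metis
  have "\<exists>f\<in>Om. nu f \<noteq> 0"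
  proof (rule ccontr)
    assume "\<not> (\<exists>f\<in>Om. nu f \<noteq> 0)"
    then have "(\<Sum>f\<in>Om. nu f) = 0" by simp
    with sumnu show False by simp
  qed
  then obtain f0 where f0: "f0 \<in> Om" "nu f0 \<noteq> 0" by blast
  then have "f0 \<in> HS" using nupos sub by blast
  then have HSpos: "card HS > 0" using finHS card_gt_0_iff by blast
  define hH where "hH = real (card HS)"
  have hHpos: "hH > 0" using HSpos by (simp add: hH_def)
  have "\<forall>x\<in>P. \<exists>D. D \<subseteq> S x \<and> card D = d" using S_card obtain_subset_with_card_n by metis
  then obtain Dx where Dx: "\<forall>x\<in>P. Dx x \<subseteq> S x \<and> card (Dx x) = d" by (metis bchoice)
  define \<rho>0 where "\<rho>0 f = hh * cc f R ^ n2 * (\<Prod>x\<in>P. cc f (S x)) / (hH * cc f R ^ d)" for f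
  define \<rho>1 where "\<rho>1 f = hh / (nn ^ r * cc f R ^ d)" for f
  define \<rho>2 where "\<rho>2 x f = cc f R ^ (card (S x) - d) * cc f (Dx x) ^ r / (nn ^ (card (S x) - d) * cc f (S x) ^ r)" for x f
  define \<rho>3 where "\<rho>3 x f = hh / (cc f (Dx x) ^ r * nn ^ d)" for x f
  have DxV: "Dx x \<subseteq> V2" if "x \<in> P" for x using Dx that S_sub by blast
  have SV: "S x \<subseteq> V2" if "x \<in> P" for x using that S_sub by blast
  have posf: "cc f R > 0 \<and> (\<Prod>x\<in>P. cc f (S x)) > 0 \<and> (\<forall>x\<in>P. cc f (S x) > 0 \<and> cc f (Dx x) > 0)"
    if f: "f \<in> Om" and ind: "indRV f" for f
    using pos_facts[OF f ind] DxV SV by blast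
  have Gibbs0: "(\<Sum>f\<in>Om. nu f * ln (\<rho>0 f)) \<le> 0"
  proof (rule gibbs[OF finOm _ sumnu])
    fix f assume f: "f \<in> Om" and "nu f > 0"
    then have ind: "indRV f" "indP f" using nupos by auto
    show "\<rho>0 f > 0" using posf[OF f ind(1)] hpos hHpos unfolding \<rho>0_def by simp
  next
    have "(\<Sum>f\<in>Om. nu f * \<rho>0 f) = (\<Sum>f\<in>Om. if indRV f \<and> indP f then 1 / hH else 0)"
    proof (intro sum.cong refl)
      fix f assume f: "f \<in> Om"
      show "nu f * \<rho>0 f = (if indRV f \<and> indP f then 1 / hH else 0)"
      proof (cases "indRV f \<and> indP f")
        case True
        then show ?thesis using posf[OF f] hpos hHpos unfolding nu_def \<rho>0_def by (simp add: field_simps)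
      next
        case False
        show ?thesis by (simp only: nu_def if_not_P[OF False] mult_zero_left)
      qed
    qed
    also have "\<dots> = real (card {f\<in>Om. indRV f \<and> indP f}) * (1 / hH)"
      by (simp add: sum.inter_filter[OF finOm, symmetric])
    also have "\<dots> \<le> real (card HS) * (1 / hH)"
    proof -
      have "card {f\<in>Om. indRV f \<and> indP f} \<le> card HS" using sub finHS by (intro card_mono) auto
      then show ?thesis using hHpos by (intro mult_right_mono) auto
    qed
    also have "\<dots> = 1" using hHpos by (simp add: hH_def)
    finally show "(\<Sum>f\<in>Om. nu f * \<rho>0 f) \<le> 1" .
  qed (use nunn in auto)
  have Gibbs1: "(\<Sum>f\<in>Om. nu f * ln (\<rho>1 f)) \<le> 0"
  proof (rule gibbs[OF finOm _ sumnu])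
    fix f assume f: "f \<in> Om" and "nu f > 0"
    then have ind: "indRV f" "indP f" using nupos by auto
    show "\<rho>1 f > 0" using posf[OF f ind(1)] hpos npos unfolding \<rho>1_def by simp
  next
    show "(\<Sum>f\<in>Om. nu f * \<rho>1 f) \<le> 1" unfolding \<rho>1_def by (rule sum_rho1[OF hpos])
  qed (use nunn in auto)
  have Gibbs23: "(\<Sum>f\<in>Om. nu f * ln (\<rho>2 x f)) + (\<Sum>f\<in>Om. nu f * ln (\<rho>3 x f)) \<le> 0" if x: "x \<in> P" for x
  proof -
    have "(\<Sum>f\<in>Om. nu f * ln (\<rho>2 x f)) \<le> 0"
    proof (rule gibbs[OF finOm _ sumnu])
      fix f assume f: "f \<in> Om" and "nu f > 0"
      then have ind: "indRV f" "indP f" using nupos by auto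
      show "\<rho>2 x f > 0" using posf[OF f ind(1)] npos x unfolding \<rho>2_def by simp
    next
      show "(\<Sum>f\<in>Om. nu f * \<rho>2 x f) \<le> 1" unfolding \<rho>2_def using Dx x by (intro sum_rho2[OF hpos x]) auto
    qed (use nunn in auto)
    moreover have "(\<Sum>f\<in>Om. nu f * ln (\<rho>3 x f)) \<le> 0"
    proof (rule gibbs[OF finOm _ sumnu])
      fix f assume f: "f \<in> Om" and "nu f > 0"
      then have ind: "indRV f" "indP f" using nupos by auto
      show "\<rho>3 x f > 0" using posf[OF f ind(1)] npos hpos x unfolding \<rho>3_def by simp
    next
      show "(\<Sum>f\<in>Om. nu f * \<rho>3 x f) \<le> 1" unfolding \<rho>3_def using Dx x DxV by (intro sum_rho3[OF hpos]) auto
    qed (use nunn in auto)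
    ultimately show ?thesis by simp
  qed
  define Ssum where "Ssum = (\<Sum>x\<in>P. real (card (S x)))"
  define p where "p = real (card P)"
  define a where "a = (real n2 - d + (Ssum - p * d) / r) / d"
  have Sge: "Ssum \<ge> p * d"
  proof -
    have "(\<Sum>x\<in>P. real d) \<le> Ssum" unfolding Ssum_def using S_card by (intro sum_mono) auto
    then show ?thesis by (simp add: p_def mult.commute)
  qed
  have a_nn: "a \<ge> 0" unfolding a_def using Sge dV2 r1 d1 by (intro divide_nonneg_pos) auto
  define E where "E f = ln (\<rho>0 f) + a * ln (\<rho>1 f) + (1 / r) * (\<Sum>x\<in>P. ln (\<rho>2 x f) + ln (\<rho>3 x f))" for f
  define T where "T = (real r * n2 + Ssum) / (real r * d) * (ln hh - (r + d) * ln nn) + (r + n2 + p) * ln nn - ln hH"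
  have sumE: "(\<Sum>f\<in>Om. nu f * E f) \<le> 0"
  proof -
    have "(\<Sum>f\<in>Om. nu f * E f) = (\<Sum>f\<in>Om. nu f * ln (\<rho>0 f)) + a * (\<Sum>f\<in>Om. nu f * ln (\<rho>1 f))
          + (1 / r) * (\<Sum>x\<in>P. (\<Sum>f\<in>Om. nu f * ln (\<rho>2 x f)) + (\<Sum>f\<in>Om. nu f * ln (\<rho>3 x f)))"
      unfolding E_def
      by (simp add: algebra_simps sum.distrib sum_distrib_left sum.swap[of _ Om P])
    also have "\<dots> \<le> 0"
    proof -
      have C: "(\<Sum>x\<in>P. (\<Sum>f\<in>Om. nu f * ln (\<rho>2 x f)) + (\<Sum>f\<in>Om. nu f * ln (\<rho>3 x f))) \<le> 0"
        using Gibbs23 by (intro sum_nonpos) auto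
      have "(1 / real r) * (\<Sum>x\<in>P. (\<Sum>f\<in>Om. nu f * ln (\<rho>2 x f)) + (\<Sum>f\<in>Om. nu f * ln (\<rho>3 x f))) \<le> 0"
        using C r1 by (intro mult_nonneg_nonpos) auto
      moreover have "a * (\<Sum>f\<in>Om. nu f * ln (\<rho>1 f)) \<le> 0" using a_nn Gibbs1 by (simp add: mult_nonneg_nonpos)
      ultimately show ?thesis using Gibbs0 by linarith
    qed
    finally show ?thesis .
  qed
  have Eeq: "nu f * E f = nu f * T" if f: "f \<in> Om" for f
  proof (cases "nu f = 0")
    case False
    then have ind: "indRV f" "indP f" using nupos by auto
    note pf = posf[OF f ind(1)]
    define lR where "lR = ln (cc f R)"
    define lx where "lx x = ln (cc f (S x))" for x
    define lD where "lD x = ln (cc f (Dx x))" for x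
    have l0: "ln (\<rho>0 f) = ln hh + n2 * lR + (\<Sum>x\<in>P. lx x) - ln hH - d * lR"
      using pf hpos hHpos unfolding \<rho>0_def lR_def lx_def
      by (simp add: ln_mult ln_div ln_realpow ln_prod[OF finP])
    have l1: "ln (\<rho>1 f) = ln hh - r * ln nn - d * lR"
      using pf hpos npos unfolding \<rho>1_def lR_def by (simp add: ln_mult ln_div ln_realpow)
    have l23: "ln (\<rho>2 x f) + ln (\<rho>3 x f) = (real (card (S x)) - d) * lR - r * lx x - real (card (S x)) * ln nn + ln hh"
      if x: "x \<in> P" for x
    proof -
      have ds: "d \<le> card (S x)" using S_card[OF x] .
      have "ln (\<rho>2 x f) = real (card (S x) - d) * lR + r * lD x - real (card (S x) - d) * ln nn - r * lx x"
        using pf npos x unfolding \<rho>2_def lR_def lx_def lD_def by (simp add: ln_mult ln_div ln_realpow)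
      moreover have "ln (\<rho>3 x f) = ln hh - r * lD x - d * ln nn"
        using pf npos hpos x unfolding \<rho>3_def lD_def by (simp add: ln_mult ln_div ln_realpow)
      ultimately show ?thesis using ds by (simp add: of_nat_diff algebra_simps)
    qed
    have "(\<Sum>x\<in>P. ln (\<rho>2 x f) + ln (\<rho>3 x f)) =
          (\<Sum>x\<in>P. (real (card (S x)) - d) * lR - r * lx x - real (card (S x)) * ln nn + ln hh)"
      using l23 by (rule sum.cong[OF refl])
    also have "\<dots> = (Ssum - p * d) * lR - r * (\<Sum>x\<in>P. lx x) - Ssum * ln nn + p * ln hh"
      unfolding Ssum_def p_def by (rule sum_lin)
    finally have l23s: "(\<Sum>x\<in>P. ln (\<rho>2 x f) + ln (\<rho>3 x f)) =
          (Ssum - p * d) * lR - r * (\<Sum>x\<in>P. lx x) - Ssum * ln nn + p * ln hh" .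
    have "E f = T"
      unfolding E_def T_def l0 l1 l23s a_def
      using alg[where rr="real r" and dd="real d" and N="real n2" and p=p and Ssum=Ssum and lR=lR
             and SL="\<Sum>x\<in>P. lx x" and lh="ln hh" and l="ln nn" and LH="ln hH"] r1 d1 by simp
    then show ?thesis by simp
  qed simp
  have "(\<Sum>f\<in>Om. nu f * T) = (\<Sum>f\<in>Om. nu f * E f)" using Eeq by (intro sum.cong) auto
  then have "(\<Sum>f\<in>Om. nu f * T) \<le> 0" using sumE by linarith
  then have "T \<le> 0" using sumnu by (simp add: sum_distrib_right[symmetric])
  then show ?thesis using HSpos unfolding T_def Ssum_def p_def hH_def by simp
qed

end



lemma hom_count_Krd:
  assumes G: "simple_graph VG EG"
  shows "hom_count (Krd_verts r d) (Krd_edge r d) VG EG =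
         (\<Sum>a\<in>PiE (Inl ` {..<r} :: (nat + nat) set) (\<lambda>_. VG). card (cmn VG EG a (Inl ` {..<r})) ^ d)"
proof -
  let ?A = "Inl ` {..<r} :: (nat + nat) set" and ?B = "Inr ` {..<d} :: (nat + nat) set"
  have finVG: "finite VG" and symG: "\<And>u v. EG u v \<Longrightarrow> EG v u" using G unfolding simple_graph_def by auto
  have disj: "?A \<inter> ?B = {}" by auto
  have cB: "card ?B = d" by (simp add: card_image)
  have homs_eq: "homs (Krd_verts r d) (Krd_edge r d) VG EG =
        {f\<in>PiE (?A \<union> ?B) (\<lambda>_. VG). \<forall>i\<in>?A. \<forall>j\<in>?B. EG (f i) (f j)}"
    unfolding homs_def Krd_verts_def Krd_edge_def by (auto intro: symG)
  have fin: "finite (PiE (?A \<union> ?B) (\<lambda>_. VG))" using finVG by (simp add: finite_PiE)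
  have "hom_count (Krd_verts r d) (Krd_edge r d) VG EG =
        (\<Sum>f\<in>PiE (?A \<union> ?B) (\<lambda>_. VG). if \<forall>i\<in>?A. \<forall>j\<in>?B. EG (f i) (f j) then 1 else 0)"
    unfolding hom_count_def homs_eq by (simp add: sum.inter_filter[OF fin, symmetric])
  also have "\<dots> = (\<Sum>a\<in>PiE ?A (\<lambda>_. VG). \<Sum>b\<in>PiE ?B (\<lambda>_. VG).
        if \<forall>j\<in>?B. b j \<in> cmn VG EG a ?A then 1 else 0)"
    apply (subst sum_PiE_split)
       apply simp apply simp apply (rule disj)
    apply (intro sum.cong refl)
    subgoal for a b using disj unfolding cmn_def by (auto simp: PiE_def Pi_def)
    done
  also have "\<dots> = (\<Sum>a\<in>PiE ?A (\<lambda>_. VG). card (cmn VG EG a ?A) ^ d)"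
    apply (intro sum.cong refl)
    apply (subst sum_PiE_ind[OF _ finVG cmn_sub])
     apply simp
    using cB apply simp
    done
  finally show ?thesis .
qed

lemma num_edges_bip:
  assumes H: "simple_graph VH EH" and U: "V1 \<union> V2 = VH" and D: "V1 \<inter> V2 = {}"
    and B: "\<forall>u v. EH u v \<longrightarrow> (u \<in> V1 \<longleftrightarrow> v \<in> V2)"
  shows "num_edges VH EH = (\<Sum>x\<in>V1. card {y\<in>VH. EH x y})"
proof -
  have finVH: "finite VH" and inV: "\<And>u v. EH u v \<Longrightarrow> u \<in> VH \<and> v \<in> VH" and symH: "\<And>u v. EH u v \<Longrightarrow> EH v u"
    using H unfolding simple_graph_def by auto
  have finV1: "finite V1" using finVH U by auto
  let ?Pairs = "SIGMA x:V1. {y\<in>VH. EH x y}"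
  have bij: "bij_betw (\<lambda>(x,y). {x,y}) ?Pairs {{u, v} | u v. u \<in> VH \<and> v \<in> VH \<and> EH u v}"
  proof (rule bij_betwI')
    fix p q assume p: "p \<in> ?Pairs" and q: "q \<in> ?Pairs"
    obtain x y where pxy: "p = (x,y)" "x \<in> V1" "EH x y" using p by auto
    obtain x' y' where qxy: "q = (x',y')" "x' \<in> V1" "EH x' y'" using q by auto
    have "y \<in> V2" "y' \<in> V2" using B pxy qxy by auto
    then show "((\<lambda>(x,y). {x,y}) p = (\<lambda>(x,y). {x,y}) q) = (p = q)"
      using pxy qxy D by (auto simp: doubleton_eq_iff)
  next
    fix p assume "p \<in> ?Pairs"
    then show "(\<lambda>(x,y). {x,y}) p \<in> {{u, v} | u v. u \<in> VH \<and> v \<in> VH \<and> EH u v}"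
      using U by auto
  next
    fix e assume "e \<in> {{u, v} | u v. u \<in> VH \<and> v \<in> VH \<and> EH u v}"
    then obtain u v where e: "e = {u,v}" "u \<in> VH" "v \<in> VH" "EH u v" by auto
    show "\<exists>p\<in>?Pairs. e = (\<lambda>(x,y). {x,y}) p"
    proof (cases "u \<in> V1")
      case True
      then show ?thesis using e by auto
    next
      case False
      then have "v \<in> V1" using B e U by auto
      moreover have "EH v u" using symH e by auto
      ultimately show ?thesis using e by (intro bexI[of _ "(v,u)"]) auto
    qed
  qed
  have "num_edges VH EH = card ?Pairs"
    unfolding num_edges_def using bij_betw_same_card[OF bij] by simp
  also have "\<dots> = (\<Sum>x\<in>V1. card {y\<in>VH. EH x y})"
    using finV1 finVH by (intro card_SigmaI) auto
  finally show ?thesis .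
qed


theorem theorem1p3:
  fixes r d :: nat
    and VH V1 V2 :: "'a set" and EH :: "'a \<Rightarrow> 'a \<Rightarrow> bool"
    and VG :: "'b set" and EG :: "'b \<Rightarrow> 'b \<Rightarrow> bool"
  assumes "r \<ge> 1" and "d \<ge> 1"
    and "simple_graph VH EH"
    and "V1 \<union> V2 = VH" and "V1 \<inter> V2 = {}"
    and "\<forall>u v. EH u v \<longrightarrow> (u \<in> V1 \<longleftrightarrow> v \<in> V2)"
    and "\<exists>R \<subseteq> V1. card R = r \<and> (\<forall>x\<in>R. \<forall>y\<in>V2. EH x y)"
    and "\<forall>x\<in>V1. degree VH EH x \<ge> d"
    and "simple_graph VG EG"
  shows "hom_density VH EH VG EG \<ge>
           hom_density (Krd_verts r d) (Krd_edge r d) VG EG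
             powr (real (num_edges VH EH) / real (r * d))"
proof -
  have finVH: "finite VH" and inVH: "\<And>u v. EH u v \<Longrightarrow> u \<in> VH \<and> v \<in> VH"
    and symH: "\<And>u v. EH u v \<Longrightarrow> EH v u"
    using assms(3) unfolding simple_graph_def by auto
  have finVG: "finite VG" and symG: "\<And>u v. EG u v \<Longrightarrow> EG v u"
    using assms(9) unfolding simple_graph_def by auto
  obtain R where R: "R \<subseteq> V1" "card R = r" "\<forall>x\<in>R. \<forall>y\<in>V2. EH x y" using assms(7) by blast
  define P where "P = V1 - R"
  define S where "S x = {y\<in>VH. EH x y}" for x
  have B: "\<forall>u v. EH u v \<longrightarrow> (u \<in> V1 \<longleftrightarrow> v \<in> V2)" using assms(6) .
  have finV1: "finite V1" and finV2: "finite V2" using finVH assms(4) by (auto intro: finite_subset)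
  have finR: "finite R" using R(1) finV1 finite_subset by blast
  have finP: "finite P" using finV1 P_def by simp
  have SV: "S x \<subseteq> V2" if "x \<in> V1" for x using that B unfolding S_def by auto
  have Sdeg: "card (S x) = degree VH EH x" for x unfolding S_def degree_def by simp
  have SR: "S x = V2" if "x \<in> R" for x
  proof
    show "S x \<subseteq> V2" using SV that R(1) by blast
    show "V2 \<subseteq> S x" using that R(3) assms(4) unfolding S_def by auto
  qed
  have Rne: "R \<noteq> {}" using R(2) assms(1) by auto
  then obtain x0 where x0: "x0 \<in> R" by auto
  have dV2: "d \<le> card V2" using assms(8) R(1) x0 SR[OF x0] Sdeg by (metis subsetD)
  interpret C: core VG EG R V2 P S d r
  proof
    show "finite VG" by (rule finVG)
    show "\<And>u v. EG u v \<Longrightarrow> EG v u" by (rule symG)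
    show "finite R" "finite V2" "finite P" by (fact finR, fact finV2, fact finP)
    show "R \<inter> V2 = {}" using R(1) assms(5) by blast
    show "R \<inter> P = {}" unfolding P_def by blast
    show "V2 \<inter> P = {}" unfolding P_def using assms(5) by blast
    show "\<And>x. x \<in> P \<Longrightarrow> S x \<subseteq> V2" using SV unfolding P_def by blast
    show "\<And>x. x \<in> P \<Longrightarrow> d \<le> card (S x)" using assms(8) Sdeg unfolding P_def by auto
    show "card R = r" by (fact R(2))
    show "1 \<le> r" "1 \<le> d" using assms(1,2) by auto
    show "d \<le> card V2" by (fact dV2)
  qed
  have VHeq: "VH = R \<union> V2 \<union> P" using assms(4) R(1) unfolding P_def by auto
  have cardVH: "card VH = r + card V2 + card P"
  proof -
    have "card (R \<union> V2 \<union> P) = card (R \<union> V2) + card P"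
      using finR finV2 finP assms(5) R(1) unfolding P_def by (intro card_Un_disjoint) auto
    also have "card (R \<union> V2) = card R + card V2"
      using finR finV2 assms(5) R(1) by (intro card_Un_disjoint) auto
    finally show ?thesis using VHeq R(2) by simp
  qed
  have medges: "num_edges VH EH = r * card V2 + (\<Sum>x\<in>P. card (S x))"
  proof -
    have "num_edges VH EH = (\<Sum>x\<in>V1. card (S x))"
      unfolding S_def by (rule num_edges_bip[OF assms(3) assms(4) assms(5) assms(6)])
    also have "V1 = R \<union> P" using R(1) unfolding P_def by auto
    also have "(\<Sum>x\<in>R \<union> P. card (S x)) = (\<Sum>x\<in>R. card (S x)) + (\<Sum>x\<in>P. card (S x))"
      using finR finP by (intro sum.union_disjoint) (auto simp: P_def)
    also have "(\<Sum>x\<in>R. card (S x)) = r * card V2" using SR R(2) by simp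
    finally show ?thesis .
  qed
  define HS where "HS = homs VH EH VG EG"
  have HSfin: "finite HS"
  proof -
    have "HS \<subseteq> PiE VH (\<lambda>_. VG)" unfolding HS_def homs_def by auto
    moreover have "finite (PiE VH (\<lambda>_. VG))" using finVH finVG by (simp add: finite_PiE)
    ultimately show ?thesis using finite_subset by blast
  qed
  have sub: "f \<in> HS" if f: "f \<in> PiE (R \<union> V2 \<union> P) (\<lambda>_. VG)" and i1: "C.indRV f" and i2: "C.indP f" for f
  proof -
    have edge: "EG (f u) (f v)" if "EH u v" "u \<in> V1" for u v
    proof (cases "u \<in> R")
      case True
      have "v \<in> V2" using B that by auto
      then show ?thesis using i1 True unfolding C.indRV_def by auto
    next
      case False
      then have "u \<in> P" using that P_def by auto
      moreover have "v \<in> S u" using that inVH unfolding S_def by auto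
      ultimately show ?thesis using i2 symG unfolding C.indP_def by auto
    qed
    have "EG (f u) (f v)" if e: "EH u v" for u v
    proof (cases "u \<in> V1")
      case True then show ?thesis using edge e by auto
    next
      case False
      then have "u \<in> V2" using inVH e assms(4) by auto
      have nv: "v \<notin> V2" using B e False by blast
      have "v \<in> VH" using inVH e by blast
      then have v1: "v \<in> V1" using nv assms(4) by blast
      have "EG (f v) (f u)" using edge[OF symH[OF e] v1] .
      then show ?thesis using symG by blast
    qed
    then show ?thesis using f VHeq unfolding HS_def homs_def by auto
  qed
  have hK: "real (hom_count (Krd_verts r d) (Krd_edge r d) VG EG) = C.hh"
  proof -
    let ?A = "Inl ` {..<r} :: (nat + nat) set" and ?B = "Inr ` {..<d} :: (nat + nat) set"
    have cA: "card ?A = r" and cB: "card ?B = d" by (simp_all add: card_image)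
    have "hom_count (Krd_verts r d) (Krd_edge r d) VG EG = (\<Sum>a\<in>PiE ?A (\<lambda>_. VG). card (cmn VG EG a ?A) ^ card ?B)"
      using hom_count_Krd[OF assms(9)] cB by simp
    also have "\<dots> = (\<Sum>y\<in>PiE ?B (\<lambda>_. VG). card (cmn VG EG y ?B) ^ card ?A)"
      by (rule double_count[OF symG]) (simp_all add: finVG)
    also have "\<dots> = (\<Sum>y\<in>PiE ?B (\<lambda>_. VG). card (cmn VG EG y ?B) ^ card R)" using cA R(2) by simp
    also have "\<dots> = (\<Sum>z\<in>PiE R (\<lambda>_. VG). card (cmn VG EG z R) ^ card ?B)"
      by (rule double_count[OF symG, symmetric]) (simp_all add: finVG finR)
    finally show ?thesis unfolding C.hh_def using cB by simp
  qed
  have cardK: "card (Krd_verts r d) = r + d"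
    unfolding Krd_verts_def by (subst card_Un_disjoint) (auto simp: card_image)
  have dK: "hom_density (Krd_verts r d) (Krd_edge r d) VG EG = C.hh / C.nn ^ (r + d)"
    unfolding hom_density_def using hK cardK by simp
  have dH: "hom_density VH EH VG EG = real (card HS) / C.nn ^ card VH"
    unfolding hom_density_def hom_count_def HS_def by simp
  have kap: "real (num_edges VH EH) / real (r * d) =
      (real r * card V2 + (\<Sum>x\<in>P. real (card (S x)))) / (real r * d)"
    using medges by simp
  show ?thesis
  proof (cases "C.hh = 0")
    case True
    then show ?thesis unfolding dK dH by simp
  next
    case False
    then have hpos: "C.hh > 0" using C.hh_nonneg by simp
    have npos: "C.nn > 0" using C.nn_pos[OF hpos] .
    have main: "card HS > 0 \<and>
      (real r * card V2 + (\<Sum>x\<in>P. real (card (S x)))) / (real r * d) * (ln C.hh - (r + d) * ln C.nn)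
        + (r + card V2 + card P) * ln C.nn \<le> ln (card HS)"
      by (rule C.core_main[OF hpos HSfin]) (rule sub; assumption)
    then have HSpos: "card HS > 0" and ineq:
      "(real r * card V2 + (\<Sum>x\<in>P. real (card (S x)))) / (real r * d) * (ln C.hh - (r + d) * ln C.nn)
        + (r + card V2 + card P) * ln C.nn \<le> ln (card HS)" by auto
    define \<kappa> where "\<kappa> = (real r * card V2 + (\<Sum>x\<in>P. real (card (S x)))) / (real r * d)"
    have "(C.hh / C.nn ^ (r + d)) powr \<kappa> = exp (\<kappa> * (ln C.hh - (r + d) * ln C.nn))"
      using hpos npos by (simp add: powr_def ln_div ln_realpow)
    also have "\<dots> \<le> exp (ln (card HS) - card VH * ln C.nn)"
      using ineq cardVH unfolding \<kappa>_def by simp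
    also have "\<dots> = real (card HS) / C.nn ^ card VH"
      using HSpos npos by (simp add: exp_diff exp_of_nat_mult)
    finally show ?thesis unfolding dK dH kap \<kappa>_def .
  qed
qed


end
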